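(* Let $R$ be a uniform $L$-layered $1$-semifield$^\dagger$, let $a\in R$, and let $f=\sum_{i=0}^m \alpha_i^{[\ell_i]}\lambda^i\in R[\lambda]$ be $a$-primary. Then for $b\in R_k$ (i.e. $b$ of layer $k$), $$f(b)=\begin{cases} (b^m)^{[k^m]} & \text{if } b>_\nu a,\\ (a^m)^{[\sum_i \ell_i k^i]} & \text{if } b\cong_\nu a,\\ \alpha_0^{[\ell_0]} & \text{if } b<_\nu a.\end{cases}$$
   Context: Concretely, $R=R(L,\mathcal{G})$ where $L$ is a totally ordered semiring$^\dagger$ (semiring without necessarily a zero) and $\mathcal{G}$ a totally ordered abelian group: elements are written $x^{[\ell]}$ with $x\in\mathcal{G}$ the value and $\ell\in L$ the layer, with $x^{[k]}y^{[\ell]}=(xy)^{[k\ell]}$ and $x^{[k]}+y^{[\ell]}$ equal to $x^{[k]}$ if $x>y$, $y^{[\ell]}$ if $x<y$, $x^{[k+\ell]}$ if $x=y$; $R_k$ denotes the elements of layer $k$. In the claim, $(c)^{[\ell]}$ denotes the element whose $\mathcal{G}$-value is that of $c$ and whose layer is $\ell$. $x\cong_\nu y$ means equal $\mathcal{G}$-values, and $x<_\nu y$ means the $\mathcal{G}$-value of $x$ is smaller. A polynomial of degree $t$ is monic if its leading coefficient is $\nu$-equivalent to $\mathbb{1}_R$; a monic polynomial $f$ of degree $t$ is $a$-primary if $f=\lambda^t+\sum_j\alpha_j\lambda^{i_j}$ with $\alpha_j\cong_\nu a^{t-i_j}$ for all $j$. Polynomials are evaluated as functions $R\to R$. *)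

theory Defs
  imports Main
begin

text \<open>The uniform layered 1-semifield R(L,G): elements are pairs (x, l) with x the
  G-value (G written additively as a linearly ordered abelian group) and l the layer.\<close>

type_synonym ('g, 'l) layered = "'g \<times> 'l"

definition lmul :: "('g::ab_group_add, 'l::times) layered \<Rightarrow> ('g, 'l) layered \<Rightarrow> ('g, 'l) layered" where
  "lmul p q = (fst p + fst q, snd p * snd q)"

definition ladd :: "('g::linorder, 'l::plus) layered \<Rightarrow> ('g, 'l) layered \<Rightarrow> ('g, 'l) layered" where
  "ladd p q = (if fst q < fst p then p else if fst p < fst q then q
               else (fst p, snd p + snd q))"

definition lone :: "('g::zero, 'l::one) layered" where
  "lone = (0, 1)"

primrec lpow :: "('g::ab_group_add, 'l::monoid_mult) layered \<Rightarrow> nat \<Rightarrow> ('g, 'l) layered" where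
  "lpow b 0 = lone"
| "lpow b (Suc n) = lmul b (lpow b n)"

text \<open>Fold of a binary operation over a nonempty list (sums in a structure without zero).\<close>
fun fold_ne :: "('a \<Rightarrow> 'a \<Rightarrow> 'a) \<Rightarrow> 'a list \<Rightarrow> 'a" where
  "fold_ne f [x] = x"
| "fold_ne f (x # y # xs) = f x (fold_ne f (y # xs))"
| "fold_ne f [] = undefined"

definition peval :: "nat \<Rightarrow> (nat \<Rightarrow> ('g::linordered_ab_group_add, 'l::{plus,monoid_mult}) layered)
                     \<Rightarrow> ('g, 'l) layered \<Rightarrow> ('g, 'l) layered" where
  "peval m c b = fold_ne ladd (map (\<lambda>i. lmul (c i) (lpow b i)) [0..<Suc m])"

definition primary :: "('g::linordered_ab_group_add, 'l::monoid_mult) layered \<Rightarrow> nat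
                       \<Rightarrow> (nat \<Rightarrow> ('g, 'l) layered) \<Rightarrow> bool" where
  "primary a m c \<longleftrightarrow> c m = lone \<and> (\<forall>i<m. fst (c i) = fst (lpow a (m - i)))"

end

theory Submission
  imports Defs
begin

lemma fold_ne_Cons: "ws \<noteq> [] \<Longrightarrow> fold_ne f (z # ws) = f z (fold_ne f ws)"
  by (cases ws) auto

lemma fold_ne_eq:
  "xs \<noteq> [] \<Longrightarrow> (\<forall>x\<in>set xs. fst x = (v::'g::linorder)) \<Longrightarrow>
   fold_ne ladd xs = (v, fold_ne (+) (map snd (xs :: ('g \<times> 'l::plus) list)))"
proof (induction xs)
  case Nil then show ?case by simp
next
  case (Cons w ws) then show ?case by (cases ws) (auto simp: ladd_def)
qed

lemma fold_ne_fst_in: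
  "xs \<noteq> [] \<Longrightarrow> fst (fold_ne ladd xs) \<in> fst ` set (xs :: ('g::linorder \<times> 'l::plus) list)"
proof (induction xs)
  case Nil then show ?case by simp
next
  case (Cons w ws) then show ?case by (cases ws) (auto simp: ladd_def)
qed

lemma fold_ne_head:
  "(\<forall>z\<in>set ys. fst z < fst x) \<Longrightarrow> fold_ne ladd (x # ys) = (x :: 'g::linorder \<times> 'l::plus)"
proof (cases ys)
  case Nil then show ?thesis by simp
next
  case (Cons w ws)
  assume h: "\<forall>z\<in>set ys. fst z < fst x"
  have "fst (fold_ne ladd ys) \<in> fst ` set ys" using Cons fold_ne_fst_in by blast
  then have "fst (fold_ne ladd ys) < fst x" using h by auto
  then show ?thesis using Cons by (simp add: ladd_def)
qed

lemma fold_ne_last: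
  "(\<forall>z\<in>set ys. fst z < fst x) \<Longrightarrow> fold_ne ladd (ys @ [x]) = (x :: 'g::linorder \<times> 'l::plus)"
proof (induction ys)
  case Nil then show ?case by simp
next
  case (Cons w ws)
  then have IH: "fold_ne ladd (ws @ [x]) = x" by simp
  have "fold_ne ladd (w # ws @ [x]) = ladd w (fold_ne ladd (ws @ [x]))"
    by (rule fold_ne_Cons) simp
  also have "\<dots> = x" using IH Cons.prems by (auto simp: ladd_def)
  finally show ?case by simp
qed

lemma fst_lpow_Suc: "fst (lpow p (Suc n)) = fst p + fst (lpow p n)"
  by (simp add: lmul_def)

lemma fst_lpow_add: "fst (lpow p (i + j)) = fst (lpow p i) + fst (lpow p j)"
  by (induction i) (auto simp: lmul_def lone_def add.assoc)

lemma snd_lpow: "snd (lpow (y, k) n) = k ^ n"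
  by (induction n) (auto simp: lmul_def lone_def)

lemma fst_lpow_only: "fst (lpow (y, k) n) = fst (lpow (y, k') n)"
  by (induction n) (auto simp: lmul_def lone_def)

theorem proposition7p16:
  fixes a :: "'g::linordered_ab_group_add \<times> 'l::{semiring, ab_semigroup_add, monoid_mult, linorder}"
    and c :: "nat \<Rightarrow> 'g \<times> 'l"
    and m :: nat and y :: 'g and k :: 'l
  assumes "primary a m c"
  shows "peval m c (y, k) =
    (if fst a < y then (fst (lpow (y, k) m), k ^ m)
     else if y = fst a then (fst (lpow a m), fold_ne (+) (map (\<lambda>i. snd (c i) * k ^ i) [0..<Suc m]))
     else c 0)"
proof -
  define t where "t i = lmul (c i) (lpow (y, k) i)" for i
  define V where "V i = fst (t i)" for i
  have cm: "c m = lone" and ci: "\<And>i. i < m \<Longrightarrow> fst (c i) = fst (lpow a (m - i))"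
    using assms by (auto simp: primary_def)
  have ci': "fst (c i) = fst (lpow a (m - i))" if "i \<le> m" for i
    using that ci cm by (cases "i = m") (auto simp: lone_def)
  have V: "V i = fst (lpow a (m - i)) + fst (lpow (y, k) i)" if "i \<le> m" for i
    using ci'[OF that] by (simp add: V_def t_def lmul_def)
  have step: "V (Suc i) = V i + (y - fst a)" if "i < m" for i
  proof -
    have "m - i = Suc (m - Suc i)" using that by simp
    then have "fst (lpow a (m - i)) = fst a + fst (lpow a (m - Suc i))"
      by (simp only: fst_lpow_Suc)
    then show ?thesis using V[of i] V[of "Suc i"] that
      by (simp add: lmul_def algebra_simps)
  qed
  have pe: "peval m c (y, k) = fold_ne ladd (map t [0..<Suc m])"
  proof -
    have "t = (\<lambda>i. lmul (c i) (lpow (y, k) i))" by (simp add: t_def fun_eq_iff)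
    then show ?thesis by (simp add: peval_def del: upt_Suc)
  qed
  show ?thesis
  proof (cases "fst a < y")
    case True
    have inc: "V j < V m" if "j < m" for j
      using that
    proof (induction "m - j" arbitrary: j)
      case 0 then show ?case by simp
    next
      case (Suc d)
      have "V j < V (Suc j)" using step[of j] Suc.prems True by simp
      moreover have "Suc j = m \<or> V (Suc j) < V m" using Suc by (cases "Suc j = m") auto
      ultimately show ?case by auto
    qed
    have "map t [0..<Suc m] = map t [0..<m] @ [t m]" by simp
    moreover have "\<forall>z\<in>set (map t [0..<m]). fst z < fst (t m)"
      using inc by (auto simp: V_def)
    ultimately have "peval m c (y, k) = t m" using pe fold_ne_last by metis
    then show ?thesis using True cm
      by (simp add: t_def lmul_def lone_def snd_lpow)
  next
    case False
    show ?thesis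
    proof (cases "y = fst a")
      case True
      have const: "V i = fst (lpow a m)" if "i \<le> m" for i
        using that
      proof (induction i)
        case 0 then show ?case using V[of 0] by (simp add: lone_def)
      next
        case (Suc i) then show ?case using step[of i] True by simp
      qed
      have e1: "peval m c (y, k) = (fst (lpow a m), fold_ne (+) (map snd (map t [0..<Suc m])))"
        unfolding pe by (rule fold_ne_eq) (auto simp: const[unfolded V_def])
      have e2: "map snd (map t [0..<Suc m]) = map (\<lambda>i. snd (c i) * k ^ i) [0..<Suc m]"
        by (simp add: t_def lmul_def snd_lpow del: upt_Suc)
      have "peval m c (y, k) = (fst (lpow a m), fold_ne (+) (map (\<lambda>i. snd (c i) * k ^ i) [0..<Suc m]))"
        using e1 e2 by metis
      then show ?thesis using True False by simp
    next
      case False2: False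
      then have lt: "y < fst a" using False by simp
      have dec: "V j < V 0" if "0 < j" "j \<le> m" for j
        using that
      proof (induction j)
        case 0 then show ?case by simp
      next
        case (Suc i)
        have "V (Suc i) < V i" using step[of i] Suc.prems lt by simp
        moreover have "i = 0 \<or> V i < V 0" using Suc by (cases "i = 0") auto
        ultimately show ?case by auto
      qed
      have "[0..<Suc m] = 0 # [Suc 0..<Suc m]" by (simp add: upt_conv_Cons)
      then have "map t [0..<Suc m] = t 0 # map t [Suc 0..<Suc m]" by simp
      moreover have "\<forall>z\<in>set (map t [Suc 0..<Suc m]). fst z < fst (t 0)"
        using dec by (auto simp: V_def)
      ultimately have "peval m c (y, k) = t 0" using pe fold_ne_head by metis
      then show ?thesis using False False2
        by (simp add: t_def lmul_def lone_def)
    qed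
  qed
qed

end
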